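(* Let $P_{(\pm)}$ be as below and, for $v\in\mathbb C$, set $\hat R_+(v)=I+vP_{(+)}$ and $\hat R_-(v)=I+vP_{(-)}$. If $v,v',v''\in\mathbb C$ satisfy $vv''\neq4$ and $v'=\dfrac{v+v''+vv''}{1-\frac14vv''}$, then $$\hat R_{\pm,(12)}(v)\,\hat R_{\pm,(23)}(v')\,\hat R_{\pm,(12)}(v'')=\hat R_{\pm,(23)}(v'')\,\hat R_{\pm,(12)}(v')\,\hat R_{\pm,(23)}(v)$$ (for each choice of sign, with the same sign throughout).
   Context: $P_{(+)}=\tfrac12\begin{pmatrix}1&0&0&1\\0&0&0&0\\0&0&0&0\\1&0&0&1\end{pmatrix}$, $P_{(-)}=\tfrac12\begin{pmatrix}1&0&0&-1\\0&0&0&0\\0&0&0&0\\-1&0&0&1\end{pmatrix}$, $I$ the $4\times4$ identity. For a $4\times4$ matrix $A$ acting on $\mathbb C^2\otimes\mathbb C^2$ (basis ordered $e_1\otimes e_1,e_1\otimes e_2,e_2\otimes e_1,e_2\otimes e_2$), $A_{(12)}=A\otimes I_2$ and $A_{(23)}=I_2\otimes A$ on $(\mathbb C^2)^{\otimes 3}$. *)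

theory Defs
  imports Complex_Main
begin

text \<open>Matrices are represented as functions nat \<Rightarrow> nat \<Rightarrow> complex, indices starting at 0.
  A 4x4 matrix acts on C^2 (x) C^2 with basis index 2*a + b for e_(a+1) (x) e_(b+1), a,b in {0,1}.
  An 8x8 matrix acts on (C^2)^(x)3 with basis index 4*a + 2*b + c.\<close>

type_synonym cmat = "nat \<Rightarrow> nat \<Rightarrow> complex"

definition mat_mult :: "nat \<Rightarrow> cmat \<Rightarrow> cmat \<Rightarrow> cmat" where
  "mat_mult n A B = (\<lambda>i k. if i < n \<and> k < n then (\<Sum>j<n. A i j * B j k) else 0)"

definition idm :: "nat \<Rightarrow> cmat" where
  "idm n = (\<lambda>i j. if i < n \<and> j < n \<and> i = j then 1 else 0)"

definition mat_of_list :: "complex list list \<Rightarrow> cmat" where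
  "mat_of_list xs = (\<lambda>i j. if i < length xs \<and> j < length (xs ! i) then xs ! i ! j else 0)"

definition Pplus :: cmat where
  "Pplus = mat_of_list [[1/2,0,0,1/2],[0,0,0,0],[0,0,0,0],[1/2,0,0,1/2]]"

definition Pminus :: cmat where
  "Pminus = mat_of_list [[1/2,0,0,-1/2],[0,0,0,0],[0,0,0,0],[-1/2,0,0,1/2]]"

definition mat_add :: "cmat \<Rightarrow> cmat \<Rightarrow> cmat" where
  "mat_add A B = (\<lambda>i j. A i j + B i j)"

definition mat_smult :: "complex \<Rightarrow> cmat \<Rightarrow> cmat" where
  "mat_smult c A = (\<lambda>i j. c * A i j)"

definition Rhat :: "cmat \<Rightarrow> complex \<Rightarrow> cmat" where
  "Rhat P v = mat_add (idm 4) (mat_smult v P)"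

definition kron :: "nat \<Rightarrow> nat \<Rightarrow> cmat \<Rightarrow> cmat \<Rightarrow> cmat" where
  "kron m n A B = (\<lambda>r s. if r < m*n \<and> s < m*n then A (r div n) (s div n) * B (r mod n) (s mod n) else 0)"

definition at12 :: "cmat \<Rightarrow> cmat" where
  "at12 A = kron 4 2 A (idm 2)"

definition at23 :: "cmat \<Rightarrow> cmat" where
  "at23 A = kron 2 4 (idm 2) A"

end

theory Submission
  imports Defs
begin
lemma less8: "(r::nat) < 8 \<Longrightarrow> r \<in> {0,1,2,3,4,5,6,7}" by auto
lemma ext8: "(\<And>(r::nat) (s::nat). r < 8 \<Longrightarrow> s < 8 \<Longrightarrow> r \<in> {0,1,2,3,4,5,6,7} \<Longrightarrow> s \<in> {0,1,2,3,4,5,6,7} \<Longrightarrow> A r s = B r s)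
  \<Longrightarrow> (\<And>(r::nat) (s::nat). \<not> (r < 8 \<and> s < 8) \<Longrightarrow> A r s = B r s) \<Longrightarrow> A = B"
proof (rule ext, rule ext)
  fix r s :: nat
  assume a1: "\<And>(r::nat) (s::nat). r < 8 \<Longrightarrow> s < 8 \<Longrightarrow> r \<in> {0,1,2,3,4,5,6,7} \<Longrightarrow> s \<in> {0,1,2,3,4,5,6,7} \<Longrightarrow> A r s = B r s"
    and a2: "\<And>(r::nat) (s::nat). \<not> (r < 8 \<and> s < 8) \<Longrightarrow> A r s = B r s"
  show "A r s = B r s"
  proof (cases "r < 8 \<and> s < 8")
    case True
    then show ?thesis using a1[of r s] less8[of r] less8[of s] by blast
  qed (use a2 in auto)
qed

definition sq8 :: "cmat \<Rightarrow> bool" where "sq8 A = (\<forall>i j. \<not> (i < 8 \<and> j < 8) \<longrightarrow> A i j = 0)"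

lemma mm_assoc: "mat_mult n (mat_mult n A B) C = mat_mult n A (mat_mult n B C)"
proof (rule ext, rule ext)
  fix i k
  show "mat_mult n (mat_mult n A B) C i k = mat_mult n A (mat_mult n B C) i k"
  proof (cases "i < n \<and> k < n")
    case True
    have "(\<Sum>j<n. (\<Sum>l<n. A i l * B l j) * C j k) = (\<Sum>j<n. \<Sum>l<n. A i l * (B l j * C j k))"
      by (simp add: sum_distrib_right mult.assoc)
    also have "\<dots> = (\<Sum>l<n. \<Sum>j<n. A i l * (B l j * C j k))"
      by (rule sum.swap)
    also have "\<dots> = (\<Sum>l<n. A i l * (\<Sum>j<n. B l j * C j k))"
      by (simp add: sum_distrib_left)
    finally show ?thesis using True by (simp add: mat_mult_def)
  qed (auto simp: mat_mult_def)
qed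
lemma mm_add_l: "mat_mult n (mat_add A B) C = mat_add (mat_mult n A C) (mat_mult n B C)"
  by (rule ext, rule ext) (auto simp: mat_mult_def mat_add_def distrib_right sum.distrib)
lemma mm_add_r: "mat_mult n C (mat_add A B) = mat_add (mat_mult n C A) (mat_mult n C B)"
  by (rule ext, rule ext) (auto simp: mat_mult_def mat_add_def distrib_left sum.distrib)
lemma mm_smult_l: "mat_mult n (mat_smult c A) B = mat_smult c (mat_mult n A B)"
  by (rule ext, rule ext) (auto simp: mat_mult_def mat_smult_def sum_distrib_left mult.assoc)
lemma mm_smult_r: "mat_mult n B (mat_smult c A) = mat_smult c (mat_mult n B A)"
  by (rule ext, rule ext) (auto simp: mat_mult_def mat_smult_def sum_distrib_left mult.left_commute)
lemma sq8_mm: "sq8 (mat_mult 8 A B)" by (simp add: sq8_def mat_mult_def)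
lemma sq8_idm: "sq8 (idm 8)" by (simp add: sq8_def idm_def)
lemma mm_id_l: "sq8 A \<Longrightarrow> mat_mult 8 (idm 8) A = A"
proof (rule ext, rule ext)
  fix i k assume "sq8 A"
  show "mat_mult 8 (idm 8) A i k = A i k"
  proof (cases "i < 8 \<and> k < 8")
    case True
    then have "(\<Sum>j<8. idm 8 i j * A j k) = A i k"
      by (simp add: idm_def if_distrib[where f="\<lambda>x. x * _"] cong: if_cong)
    then show ?thesis using True by (simp add: mat_mult_def)
  qed (use \<open>sq8 A\<close> in \<open>auto simp: mat_mult_def sq8_def\<close>)
qed
lemma mm_id_r: "sq8 A \<Longrightarrow> mat_mult 8 A (idm 8) = A"
proof (rule ext, rule ext)
  fix i k assume "sq8 A"
  show "mat_mult 8 A (idm 8) i k = A i k"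
  proof (cases "i < 8 \<and> k < 8")
    case True
    then have "(\<Sum>j<8. A i j * idm 8 j k) = A i k"
      by (simp add: idm_def if_distrib[where f="\<lambda>x. _ * x"] cong: if_cong)
    then show ?thesis using True by (simp add: mat_mult_def)
  qed (use \<open>sq8 A\<close> in \<open>auto simp: mat_mult_def sq8_def\<close>)
qed

definition pat :: "complex \<Rightarrow> nat \<Rightarrow> nat \<Rightarrow> nat \<Rightarrow> nat \<Rightarrow> cmat" where
  "pat \<sigma> a b c d = (\<lambda>r s. if (r = a \<or> r = b) \<and> (s = a \<or> s = b) then (if r = s then 1/2 else \<sigma>/2)
     else if (r = c \<or> r = d) \<and> (s = c \<or> s = d) then (if r = s then 1/2 else \<sigma>/2) else 0)"

lemma mm_pat:
  assumes "distinct [a,b,c,d]" "a<8" "b<8" "c<8" "d<8"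
  shows "mat_mult 8 (pat \<sigma> a b c d) B = (\<lambda>i k. if i<8 \<and> k<8 then pat \<sigma> a b c d i a * B a k + pat \<sigma> a b c d i b * B b k + pat \<sigma> a b c d i c * B c k + pat \<sigma> a b c d i d * B d k else 0)"
proof (rule ext, rule ext)
  fix i k
  have "(\<Sum>j<8. pat \<sigma> a b c d i j * B j k) = (\<Sum>j\<in>{a,b,c,d}. pat \<sigma> a b c d i j * B j k)"
    by (rule sum.mono_neutral_right) (use assms in \<open>auto simp: pat_def\<close>)
  also have "\<dots> = pat \<sigma> a b c d i a * B a k + pat \<sigma> a b c d i b * B b k + pat \<sigma> a b c d i c * B c k + pat \<sigma> a b c d i d * B d k"
    using assms by (simp add: add.assoc)
  finally show "mat_mult 8 (pat \<sigma> a b c d) B i k = (if i<8 \<and> k<8 then pat \<sigma> a b c d i a * B a k + pat \<sigma> a b c d i b * B b k + pat \<sigma> a b c d i c * B c k + pat \<sigma> a b c d i d * B d k else 0)"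
    by (simp add: mat_mult_def)
qed

lemma mmX: "mat_mult 8 (pat \<sigma> 0 6 1 7) B = (\<lambda>i k. if i<8 \<and> k<8 then pat \<sigma> 0 6 1 7 i 0 * B 0 k + pat \<sigma> 0 6 1 7 i 6 * B 6 k + pat \<sigma> 0 6 1 7 i 1 * B 1 k + pat \<sigma> 0 6 1 7 i 7 * B 7 k else 0)"
  using mm_pat[of 0 6 1 7 \<sigma> B] by simp
lemma mmY: "mat_mult 8 (pat \<sigma> 0 3 4 7) B = (\<lambda>i k. if i<8 \<and> k<8 then pat \<sigma> 0 3 4 7 i 0 * B 0 k + pat \<sigma> 0 3 4 7 i 3 * B 3 k + pat \<sigma> 0 3 4 7 i 4 * B 4 k + pat \<sigma> 0 3 4 7 i 7 * B 7 k else 0)"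
  using mm_pat[of 0 3 4 7 \<sigma> B] by simp

lemma ext8s: "sq8 A \<Longrightarrow> sq8 B \<Longrightarrow> (\<And>(r::nat) (s::nat). r \<in> {0,1,2,3,4,5,6,7} \<Longrightarrow> s \<in> {0,1,2,3,4,5,6,7} \<Longrightarrow> A r s = B r s) \<Longrightarrow> A = B"
  by (rule ext8) (auto simp: sq8_def)
lemma sq8_pat: "a < 8 \<Longrightarrow> b < 8 \<Longrightarrow> c < 8 \<Longrightarrow> d < 8 \<Longrightarrow> sq8 (pat \<sigma> a b c d)"
  by (auto simp: sq8_def pat_def)
lemma sq8_smult: "sq8 A \<Longrightarrow> sq8 (mat_smult c A)"
  by (auto simp: sq8_def mat_smult_def)
lemma sq8_add: "sq8 A \<Longrightarrow> sq8 B \<Longrightarrow> sq8 (mat_add A B)"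
  by (auto simp: sq8_def mat_add_def)

lemma c3: "\<sigma> = 1 \<or> \<sigma> = -1 \<Longrightarrow> mat_mult 8 (pat \<sigma> 0 6 1 7) (mat_mult 8 (pat \<sigma> 0 3 4 7) (pat \<sigma> 0 6 1 7)) = mat_smult (1/4) (pat \<sigma> 0 6 1 7)"
  apply (rule ext8s, simp add: sq8_mm, simp add: sq8_smult sq8_pat)
  apply (simp only: mmX mmY)
  apply (elim disjE; hypsubst; (elim insertE emptyE)?; simp add: pat_def mat_smult_def)
  done
lemma c4: "\<sigma> = 1 \<or> \<sigma> = -1 \<Longrightarrow> mat_mult 8 (pat \<sigma> 0 3 4 7) (mat_mult 8 (pat \<sigma> 0 6 1 7) (pat \<sigma> 0 3 4 7)) = mat_smult (1/4) (pat \<sigma> 0 3 4 7)"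
  apply (rule ext8s, simp add: sq8_mm, simp add: sq8_smult sq8_pat)
  apply (simp only: mmX mmY)
  apply (elim disjE; hypsubst; (elim insertE emptyE)?; simp add: pat_def mat_smult_def)
  done
lemma c1: "\<sigma> = 1 \<or> \<sigma> = -1 \<Longrightarrow> mat_mult 8 (pat \<sigma> 0 6 1 7) (pat \<sigma> 0 6 1 7) = pat \<sigma> 0 6 1 7"
  apply (rule ext8s, simp add: sq8_mm, simp add: sq8_pat)
  apply (simp only: mmX)
  apply (elim disjE; hypsubst; (elim insertE emptyE)?; simp add: pat_def)
  done
lemma c2: "\<sigma> = 1 \<or> \<sigma> = -1 \<Longrightarrow> mat_mult 8 (pat \<sigma> 0 3 4 7) (pat \<sigma> 0 3 4 7) = pat \<sigma> 0 3 4 7"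
  apply (rule ext8s, simp add: sq8_mm, simp add: sq8_pat)
  apply (simp only: mmY)
  apply (elim disjE; hypsubst; (elim insertE emptyE)?; simp add: pat_def)
  done

lemma sq8_at12: "sq8 (at12 A)" by (simp add: sq8_def at12_def kron_def)
lemma sq8_at23: "sq8 (at23 A)" by (simp add: sq8_def at23_def kron_def)

lemma expl12p: "at12 Pplus = pat 1 0 6 1 7"
  by (rule ext8s, rule sq8_at12, simp add: sq8_pat; (elim insertE emptyE)?; simp add: at12_def kron_def idm_def Pplus_def mat_of_list_def pat_def)
lemma expl12m: "at12 Pminus = pat (-1) 0 6 1 7"
  by (rule ext8s, rule sq8_at12, simp add: sq8_pat; (elim insertE emptyE)?; simp add: at12_def kron_def idm_def Pminus_def mat_of_list_def pat_def)
lemma expl23p: "at23 Pplus = pat 1 0 3 4 7"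
  by (rule ext8s, rule sq8_at23, simp add: sq8_pat; (elim insertE emptyE)?; simp add: at23_def kron_def idm_def Pplus_def mat_of_list_def pat_def)
lemma expl23m: "at23 Pminus = pat (-1) 0 3 4 7"
  by (rule ext8s, rule sq8_at23, simp add: sq8_pat; (elim insertE emptyE)?; simp add: at23_def kron_def idm_def Pminus_def mat_of_list_def pat_def)

lemma rh12: "at12 (Rhat P v) = mat_add (idm 8) (mat_smult v (at12 P))"
  by (rule ext8s, rule sq8_at12, simp add: sq8_add sq8_idm sq8_smult sq8_at12; (elim insertE emptyE)?;
      simp add: at12_def kron_def idm_def Rhat_def mat_add_def mat_smult_def)
lemma rh23: "at23 (Rhat P v) = mat_add (idm 8) (mat_smult v (at23 P))"
  by (rule ext8s, rule sq8_at23, simp add: sq8_add sq8_idm sq8_smult sq8_at23; (elim insertE emptyE)?;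
      simp add: at23_def kron_def idm_def Rhat_def mat_add_def mat_smult_def)

lemma braid:
  fixes a b c :: complex
  assumes X: "sq8 X" and Y: "sq8 Y"
    and XX: "mat_mult 8 X X = X" and YY: "mat_mult 8 Y Y = Y"
    and XYX: "mat_mult 8 X (mat_mult 8 Y X) = mat_smult (1/4) X"
    and YXY: "mat_mult 8 Y (mat_mult 8 X Y) = mat_smult (1/4) Y"
    and e: "b * (4 - a * c) = 4 * (a + c + a * c)"
  shows "mat_mult 8 (mat_mult 8 (mat_add (idm 8) (mat_smult a X)) (mat_add (idm 8) (mat_smult b Y))) (mat_add (idm 8) (mat_smult c X))
   = mat_mult 8 (mat_mult 8 (mat_add (idm 8) (mat_smult c Y)) (mat_add (idm 8) (mat_smult b X))) (mat_add (idm 8) (mat_smult a Y))"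
  apply (simp only: mm_assoc mm_add_l mm_add_r mm_smult_l mm_smult_r mm_id_l mm_id_r X Y XX YY XYX YXY sq8_mm sq8_idm sq8_add sq8_smult)
  apply (rule ext, rule ext)
  apply (simp add: mat_add_def mat_smult_def)
  using e by algebra

theorem mainTheorem7:
  fixes v v' v'' :: complex
  assumes "v * v'' \<noteq> 4"
    and "v' = (v + v'' + v * v'') / (1 - v * v'' / 4)"
  shows "\<forall>P \<in> {Pplus, Pminus}.
    mat_mult 8 (mat_mult 8 (at12 (Rhat P v)) (at23 (Rhat P v'))) (at12 (Rhat P v''))
    = mat_mult 8 (mat_mult 8 (at23 (Rhat P v'')) (at12 (Rhat P v'))) (at23 (Rhat P v))"
proof -
  have d: "4 - v*v'' \<noteq> 0" using assms(1) by auto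
  have "1 - v * v'' / 4 = (4 - v*v'') / 4" by simp
  then have e: "v' * (4 - v*v'') = 4*(v + v'' + v*v'')" using assms(2) d by (simp add: field_simps)
  have s: "(1::complex) = 1 \<or> (1::complex) = -1" "(-1::complex) = 1 \<or> (-1::complex) = -1" by simp_all
  show ?thesis
    unfolding rh12 rh23
    using braid[OF sq8_pat sq8_pat c1[OF s(1)] c2[OF s(1)] c3[OF s(1)] c4[OF s(1)] e]
      braid[OF sq8_pat sq8_pat c1[OF s(2)] c2[OF s(2)] c3[OF s(2)] c4[OF s(2)] e]
    by (simp only: expl12p expl12m expl23p expl23m insert_iff empty_iff ball_simps simp_thms)
qed
end
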